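(* Let $r_A,r_B>0$ satisfy $r_A+r_B\le CK_z\rho|\Lambda|$. Then, for $\rho\bar a^3$ small enough, the functional $$F(r_A,r_B)=\frac{8\pi\bar a}{|\Lambda|}(\rho\bar a^3)^{1/4}(r_A^2+r_B^2)+|\Lambda|^{-3/2}G(r_A,r_B)^{5/4}I(r_A,r_B)-\mu_Ar_A-\mu_Br_B$$ is convex in $(r_A,r_B)$.
   Context: $a_A,a_B,a_{AB}>0$ with $a_{AB}^2\le a_Aa_B$, $\bar a=\max\{a_A,a_B,a_{AB}\}$; $\rho>0$, $|\Lambda|>0$ a volume, $\mu_A,\mu_B\in\mathbb R$, $C>0$ a constant, $K_z=(\rho\bar a^3)^{-\nu}$ with $\nu\in(0,\frac1{10000}]$. $G(r_A,r_B)=r_A^2a_A^2+2r_Ar_Ba_{AB}^2+r_B^2a_B^2$; $I(r_A,r_B)=(8\pi)^{5/2}\frac{2\sqrt2}{15\pi^2}(\mu_+^{5/2}+\mu_-^{5/2})$ with $\mu_\pm=\sqrt{1+\xi_{AB}}\pm\sqrt{1-\xi_{AB}}$ and $\xi_{AB}=\frac{2r_Ar_B(a_Aa_B-a_{AB}^2)}{r_A^2a_A^2+2r_Ar_Ba_{AB}^2+r_B^2a_B^2}$. *)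

theory Defs
  imports "HOL-Analysis.Analysis"
begin

definition abar :: "real \<Rightarrow> real \<Rightarrow> real \<Rightarrow> real" where
  "abar aA aB aAB = max aA (max aB aAB)"

definition Kz :: "real \<Rightarrow> real \<Rightarrow> real \<Rightarrow> real \<Rightarrow> real \<Rightarrow> real" where
  "Kz \<nu> \<rho> aA aB aAB = (\<rho> * abar aA aB aAB ^ 3) powr (- \<nu>)"

definition Gf :: "real \<Rightarrow> real \<Rightarrow> real \<Rightarrow> real \<Rightarrow> real \<Rightarrow> real" where
  "Gf aA aB aAB rA rB = rA^2 * aA^2 + 2 * rA * rB * aAB^2 + rB^2 * aB^2"

definition xiAB :: "real \<Rightarrow> real \<Rightarrow> real \<Rightarrow> real \<Rightarrow> real \<Rightarrow> real" where
  "xiAB aA aB aAB rA rB =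
     2 * rA * rB * (aA * aB - aAB^2) / (rA^2 * aA^2 + 2 * rA * rB * aAB^2 + rB^2 * aB^2)"

definition mu_plus :: "real \<Rightarrow> real" where
  "mu_plus \<xi> = sqrt (1 + \<xi>) + sqrt (1 - \<xi>)"

definition mu_minus :: "real \<Rightarrow> real" where
  "mu_minus \<xi> = sqrt (1 + \<xi>) - sqrt (1 - \<xi>)"

definition If :: "real \<Rightarrow> real \<Rightarrow> real \<Rightarrow> real \<Rightarrow> real \<Rightarrow> real" where
  "If aA aB aAB rA rB =
     (let \<xi> = xiAB aA aB aAB rA rB in
      (8 * pi) powr (5/2) * (2 * sqrt 2 / (15 * pi^2)) *
        (mu_plus \<xi> powr (5/2) + mu_minus \<xi> powr (5/2)))"

text \<open>The functional F; L stands for the volume |Lambda|.\<close>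
definition Ff :: "real \<Rightarrow> real \<Rightarrow> real \<Rightarrow> real \<Rightarrow> real \<Rightarrow> real \<Rightarrow> real \<Rightarrow> real \<Rightarrow> real \<Rightarrow> real" where
  "Ff aA aB aAB \<rho> L \<mu>A \<mu>B rA rB =
     8 * pi * abar aA aB aAB / L * (\<rho> * abar aA aB aAB ^ 3) powr (1/4) * (rA^2 + rB^2)
     + L powr (-3/2) * Gf aA aB aAB rA rB powr (5/4) * If aA aB aAB rA rB
     - \<mu>A * rA - \<mu>B * rB"

end

theory Submission
  imports Defs
begin

lemma fconv:
  fixes x y t :: real
  assumes "x \<ge> 0" "y \<ge> 0" "0 \<le> t" "t \<le> 1"
  shows "((1-t)*x + t*y) powr (5/2) \<le> (1-t) * x powr (5/2) + t * y powr (5/2)"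
proof -
  consider "x > 0" "y > 0" | "x = 0" | "y = 0" using assms by linarith
  then show ?thesis
  proof cases
    case 1
    then show ?thesis using convex_onD[OF powr_convex[of "5/2"], of t x y] assms by simp
  next
    case 2
    have "(t*y) powr (5/2) = t powr (5/2) * y powr (5/2)"
      using assms by (simp add: powr_mult)
    also have "t powr (5/2) \<le> t powr 1"
      using assms by (intro powr_mono') auto
    hence "t powr (5/2) * y powr (5/2) \<le> t * y powr (5/2)"
      using assms by (cases "t = 0") (auto intro: mult_right_mono)
    finally show ?thesis using 2 by simp
  next
    case 3
    have "((1-t)*x) powr (5/2) = (1-t) powr (5/2) * x powr (5/2)"
      using assms by (simp add: powr_mult)
    also have "(1-t) powr (5/2) \<le> (1-t) powr 1"
      using assms by (intro powr_mono') auto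
    hence "(1-t) powr (5/2) * x powr (5/2) \<le> (1-t) * x powr (5/2)"
      using assms by (cases "t = 1") (auto intro: mult_right_mono)
    finally show ?thesis using 3 by simp
  qed
qed

lemma hmono:
  fixes s S T :: real
  assumes "0 \<le> s" "s \<le> S" "S \<le> T"
  shows "(T+s) powr (5/2) + (T-s) powr (5/2) \<le> (T+S) powr (5/2) + (T-S) powr (5/2)"
proof (cases "S = 0")
  case True then show ?thesis using assms by simp
next
  case False
  then have Sp: "S > 0" using assms by simp
  define a where "a = (S+s)/(2*S)"
  have a0: "0 \<le> a" "a \<le> 1" using assms Sp by (auto simp: a_def field_simps)
  have e1: "(1-a)*(T-S) + a*(T+S) = T+s" using Sp by (simp add: a_def field_simps)
  have e2: "(1-(1-a))*(T-S) + (1-a)*(T+S) = T-s" using Sp by (simp add: a_def field_simps)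
  have "(T+s) powr (5/2) \<le> (1-a)*(T-S) powr (5/2) + a*(T+S) powr (5/2)"
    using fconv[of "T-S" "T+S" a] assms a0 e1 by simp
  moreover have "(T-s) powr (5/2) \<le> (1-(1-a))*(T-S) powr (5/2) + (1-a)*(T+S) powr (5/2)"
    using fconv[of "T-S" "T+S" "1-a"] assms a0 e2 by simp
  ultimately show ?thesis by (simp add: algebra_simps)
qed

lemma abstract_convex:
  fixes T l1 l2 :: "real \<times> real \<Rightarrow> real" and Q :: "(real \<times> real) set"
  assumes lin: "\<And>x y t. T ((1-t) *\<^sub>R x + t *\<^sub>R y) = (1-t) * T x + t * T y"
      "\<And>x y t. l1 ((1-t) *\<^sub>R x + t *\<^sub>R y) = (1-t) * l1 x + t * l1 y"
      "\<And>x y t. l2 ((1-t) *\<^sub>R x + t *\<^sub>R y) = (1-t) * l2 x + t * l2 y"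
    and le: "\<And>x. x \<in> Q \<Longrightarrow> sqrt (l1 x ^ 2 + l2 x ^ 2) \<le> T x"
    and cQ: "convex Q"
  shows "convex_on Q (\<lambda>x. (T x + sqrt (l1 x ^ 2 + l2 x ^ 2)) powr (5/2)
                          + (T x - sqrt (l1 x ^ 2 + l2 x ^ 2)) powr (5/2))"
proof (rule convex_onI[OF _ cQ])
  fix t :: real and x y assume t: "0 < t" "t < 1" and xy: "x \<in> Q" "y \<in> Q"
  define z where "z = (1-t) *\<^sub>R x + t *\<^sub>R y"
  have zQ: "z \<in> Q" using cQ xy t unfolding z_def convex_alt by auto
  define s where "s = (\<lambda>x. sqrt (l1 x ^ 2 + l2 x ^ 2))"
  have s0: "\<And>x. s x \<ge> 0" by (simp add: s_def)
  have sc: "sqrt ((c * a)^2 + (c * b)^2) = c * sqrt (a^2 + b^2)" if "c \<ge> 0" for a b c :: real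
  proof -
    have "(c * a)^2 + (c * b)^2 = c^2 * (a^2 + b^2)" by (simp add: algebra_simps power_mult_distrib)
    then show ?thesis using that by (simp add: real_sqrt_mult)
  qed
  have "s z = sqrt (((1-t) * l1 x + t * l1 y)^2 + ((1-t) * l2 x + t * l2 y)^2)"
    by (simp add: s_def z_def lin)
  also have "\<dots> \<le> sqrt (((1-t) * l1 x)^2 + ((1-t) * l2 x)^2) + sqrt ((t * l1 y)^2 + (t * l2 y)^2)"
    by (rule real_sqrt_sum_squares_triangle_ineq)
  also have "\<dots> = (1-t) * s x + t * s y" using t by (simp add: sc s_def)
  finally have szle: "s z \<le> (1-t) * s x + t * s y" .
  have Tz: "T z = (1-t) * T x + t * T y" by (simp add: z_def lin)
  have sx: "s x \<le> T x" "s y \<le> T y" using le xy by (auto simp: s_def)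
  have SleT: "(1-t) * s x + t * s y \<le> T z" unfolding Tz using sx t
    by (intro add_mono mult_left_mono) auto
  have "(T z + s z) powr (5/2) + (T z - s z) powr (5/2)
     \<le> (T z + ((1-t) * s x + t * s y)) powr (5/2) + (T z - ((1-t) * s x + t * s y)) powr (5/2)"
    by (rule hmono[OF s0 szle SleT])
  also have "T z + ((1-t) * s x + t * s y) = (1-t) * (T x + s x) + t * (T y + s y)"
    by (simp add: Tz algebra_simps)
  also have "T z - ((1-t) * s x + t * s y) = (1-t) * (T x - s x) + t * (T y - s y)"
    by (simp add: Tz algebra_simps)
  also have "((1-t) * (T x + s x) + t * (T y + s y)) powr (5/2) \<le> (1-t) * (T x + s x) powr (5/2) + t * (T y + s y) powr (5/2)"
    using sx s0[of x] s0[of y] t by (intro fconv) auto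
  also have "((1-t) * (T x - s x) + t * (T y - s y)) powr (5/2) \<le> (1-t) * (T x - s x) powr (5/2) + t * (T y - s y) powr (5/2)"
    using sx t by (intro fconv) auto
  finally show "(T z + s z) powr (5/2) + (T z - s z) powr (5/2) \<le>
     (1-t) * ((T x + s x) powr (5/2) + (T x - s x) powr (5/2)) + t * ((T y + s y) powr (5/2) + (T y - s y) powr (5/2))"
    by (simp add: algebra_simps)
qed


lemma identity:
  fixes aA aB aAB rA rB :: real
  assumes pos: "aA > 0" "aB > 0" "aAB > 0" "aAB^2 \<le> aA * aB" "rA > 0" "rB > 0"
  defines "d \<equiv> aA*aB - aAB^2"
  defines "T \<equiv> aA*rA + aB*rB"
  defines "s \<equiv> sqrt ((aA*rA + (aAB^2 - d)/aA*rB)^2 + (2*aAB* sqrt d/aA*rB)^2)"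
  shows "Gf aA aB aAB rA rB powr (5/4) * If aA aB aAB rA rB =
     (8 * pi) powr (5/2) * (2 * sqrt 2 / (15 * pi^2)) * ((T+s) powr (5/2) + (T-s) powr (5/2))"
    and "s \<le> T"
proof -
  have d0: "d \<ge> 0" using pos by (simp add: d_def)
  have sqd: "(sqrt d)^2 = d" using d0 by simp
  have "(aA*rA + (aAB^2 - d)/aA*rB)^2 + (2*aAB* sqrt d/aA*rB)^2
        = (aA*rA + (aAB^2 - d)/aA*rB)^2 + 4*aAB^2*(sqrt d)^2/aA^2*rB^2"
    by (simp add: power_mult_distrib power_divide)
  also have "\<dots> = T^2 - 4*d*rA*rB" using pos unfolding sqd
    by (simp add: T_def d_def field_simps power2_eq_square)
  finally have s2': "(aA*rA + (aAB^2 - d)/aA*rB)^2 + (2*aAB * sqrt d/aA*rB)^2 = T^2 - 4*d*rA*rB" .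
  have s2: "s^2 = T^2 - 4*d*rA*rB" unfolding s_def s2'[symmetric]
    by (rule real_sqrt_pow2) simp
  have s0: "s \<ge> 0" by (simp add: s_def)
  have T0: "T > 0" using pos unfolding T_def by (intro add_pos_pos mult_pos_pos)
  have D0: "d*rA*rB \<ge> 0" using d0 pos by (intro mult_nonneg_nonneg) auto
  have "s^2 \<le> T^2" using s2 D0 by linarith
  from power2_le_imp_le[OF this] T0 show sT: "s \<le> T" by linarith
  define G where "G = Gf aA aB aAB rA rB"
  have GT: "G = T^2 - 2*d*rA*rB" by (simp add: G_def Gf_def T_def d_def power2_eq_square algebra_simps)
  have Gp: "G > 0" using pos by (simp add: G_def Gf_def add_pos_pos)
  define \<xi> where "\<xi> = xiAB aA aB aAB rA rB"
  have xi: "\<xi> = 2*d*rA*rB / G" by (simp add: \<xi>_def xiAB_def G_def Gf_def d_def)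
  have xi0: "\<xi> \<ge> 0" using D0 Gp by (simp add: xi)
  have GD: "G - 2*d*rA*rB = s^2" by (simp add: GT s2)
  have "2*d*rA*rB \<le> G" using GD zero_le_power2[of s] by linarith
  then have xi1: "\<xi> \<le> 1" using Gp by (simp add: xi pos_divide_le_eq)
  define a where "a = sqrt (1+\<xi>)"
  define b where "b = sqrt (1-\<xi>)"
  have a2: "a^2 = 1+\<xi>" unfolding a_def using xi0 by (intro real_sqrt_pow2) linarith
  have b2: "b^2 = 1-\<xi>" unfolding b_def using xi1 by (intro real_sqrt_pow2) linarith
  have a0: "a \<ge> 0" unfolding a_def using xi0 by (intro real_sqrt_ge_zero) linarith
  have b0: "b \<ge> 0" unfolding b_def using xi1 by (intro real_sqrt_ge_zero) linarith
  have ba: "b \<le> a" unfolding a_def b_def using xi0 by (intro real_sqrt_le_mono) linarith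
  have "(a * b)^2 = (T * s/G)^2"
  proof -
    have "(a * b)^2 = a^2 * b^2" by (simp add: power_mult_distrib)
    also have "\<dots> = (1+\<xi>)*(1-\<xi>)" by (simp add: a2 b2)
    also have "\<dots> = 1 - \<xi>^2" by (simp add: algebra_simps power2_eq_square)
    also have "\<dots> = (G^2 - (2*d*rA*rB)^2)/G^2" using Gp by (simp add: xi field_simps)
    also have "G^2 - (2*d*rA*rB)^2 = (T * s)^2" unfolding power_mult_distrib s2 GT
      by (simp add: algebra_simps power2_eq_square)
    finally show ?thesis by (simp add: power_divide)
  qed
  moreover have "0 \<le> a*b" using a0 b0 by (rule mult_nonneg_nonneg)
  moreover have "0 \<le> T * s/G" using T0 s0 Gp by (intro divide_nonneg_pos mult_nonneg_nonneg) auto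
  ultimately have ab: "a*b = T * s/G" by (rule power2_eq_imp_eq)
  have "(a+b)^2 = ((T+s)/sqrt G)^2"
  proof -
    have "(a+b)^2 = 2 + 2*(a * b)" unfolding power2_sum a2 b2 by linarith
    also have "\<dots> = (T+s)^2 / G"
    proof -
      have e: "(T+s)^2 = 2*G + 2*(T * s)" unfolding power2_sum s2 GT by (simp add: algebra_simps)
      show ?thesis unfolding e ab using Gp by (simp add: add_divide_distrib diff_divide_distrib)
    qed
    finally show ?thesis using Gp by (simp add: power_divide)
  qed
  moreover have "0 \<le> a+b" using a0 b0 by linarith
  moreover have "0 \<le> (T+s)/sqrt G" using T0 s0 Gp by (intro divide_nonneg_pos) auto
  ultimately have "a+b = (T+s)/sqrt G" by (rule power2_eq_imp_eq)
  hence mp: "mu_plus \<xi> = (T+s)/sqrt G" unfolding mu_plus_def a_def[symmetric] b_def[symmetric] .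
  have "(a-b)^2 = ((T-s)/sqrt G)^2"
  proof -
    have "(a-b)^2 = 2 - 2*(a * b)" unfolding power2_diff a2 b2 by linarith
    also have "\<dots> = (T-s)^2 / G"
    proof -
      have e: "(T-s)^2 = 2*G - 2*(T * s)" unfolding power2_diff s2 GT by (simp add: algebra_simps)
      show ?thesis unfolding e ab using Gp by (simp add: add_divide_distrib diff_divide_distrib)
    qed
    finally show ?thesis using Gp by (simp add: power_divide)
  qed
  moreover have "0 \<le> a-b" using ba by linarith
  moreover have "0 \<le> (T-s)/sqrt G" using sT Gp by (intro divide_nonneg_pos) auto
  ultimately have "a-b = (T-s)/sqrt G" by (rule power2_eq_imp_eq)
  hence mm: "mu_minus \<xi> = (T-s)/sqrt G" unfolding mu_minus_def a_def[symmetric] b_def[symmetric] .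
  have sG: "sqrt G powr (5/2) = G powr (5/4)" using Gp
    by (simp add: powr_half_sqrt[symmetric] powr_powr)
  have k: "G powr (5/4) * (x / sqrt G) powr (5/2) = x powr (5/2)" if "x \<ge> 0" for x
    using that Gp by (simp add: powr_divide sG)
  show "Gf aA aB aAB rA rB powr (5/4) * If aA aB aAB rA rB =
     (8 * pi) powr (5/2) * (2 * sqrt 2 / (15 * pi^2)) * ((T+s) powr (5/2) + (T-s) powr (5/2))"
  proof -
    have e: "G powr (5/4) * ((mu_plus \<xi>) powr (5/2) + (mu_minus \<xi>) powr (5/2)) = (T+s) powr (5/2) + (T-s) powr (5/2)"
      unfolding mp mm distrib_left using k[of "T+s"] k[of "T-s"] T0 s0 sT by simp
    have "Gf aA aB aAB rA rB powr (5/4) * If aA aB aAB rA rB = (8 * pi) powr (5/2) * (2 * sqrt 2 / (15 * pi^2)) *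
       (G powr (5/4) * ((mu_plus \<xi>) powr (5/2) + (mu_minus \<xi>) powr (5/2)))"
      unfolding If_def Let_def \<xi>_def[symmetric] G_def[symmetric] by (simp only: mult_ac)
    then show ?thesis unfolding e .
  qed
qed


lemma convex_on_cong':
  assumes "convex_on S f" "\<And>x. x \<in> S \<Longrightarrow> f x = g x"
  shows "convex_on S g"
proof -
  have cS: "convex S" using assms(1) by (rule convex_on_imp_convex)
  show ?thesis
  proof (rule convex_onI[OF _ cS])
    fix t :: real and x y assume t: "0 < t" "t < 1" and xy: "x \<in> S" "y \<in> S"
    have "(1-t) *\<^sub>R x + t *\<^sub>R y \<in> S" using cS xy t unfolding convex_alt by auto
    then show "g ((1-t) *\<^sub>R x + t *\<^sub>R y) \<le> (1-t) * g x + t * g y"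
      using convex_onD[OF assms(1), of t x y] t xy assms(2) by auto
  qed
qed

lemma sq_conv:
  fixes a b t :: real
  assumes "0 \<le> t" "t \<le> 1"
  shows "((1-t)* a + t* b)^2 \<le> (1-t)* a^2 + t* b^2"
proof -
  have "(1-t)* a^2 + t* b^2 - ((1-t)* a + t* b)^2 = t* (1-t)* (a-b)^2"
    by (simp add: power2_eq_square algebra_simps)
  moreover have "t* (1-t)* (a-b)^2 \<ge> 0" using assms by simp
  ultimately show ?thesis by linarith
qed

lemma quad_convex:
  fixes S :: "(real \<times> real) set"
  assumes "convex S"
  shows "convex_on S (\<lambda>p. fst p ^ 2 + snd p ^ 2)"
proof (rule convex_onI[OF _ assms])
  fix t :: real and x y :: "real \<times> real" assume t: "0 < t" "t < 1"
  show "fst ((1-t) *\<^sub>R x + t *\<^sub>R y) ^ 2 + snd ((1-t) *\<^sub>R x + t *\<^sub>R y) ^ 2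
        \<le> (1-t) * (fst x ^ 2 + snd x ^ 2) + t * (fst y ^ 2 + snd y ^ 2)"
    using sq_conv[of t "fst x" "fst y"] sq_conv[of t "snd x" "snd y"] t
    by (simp add: algebra_simps)
qed

lemma lin_convex:
  fixes S :: "(real \<times> real) set"
  assumes "convex S"
  shows "convex_on S (\<lambda>p. \<alpha> * fst p + \<beta> * snd p)"
proof (rule convex_onI[OF _ assms])
  fix t :: real and x y :: "real \<times> real"
  show "\<alpha> * fst ((1-t) *\<^sub>R x + t *\<^sub>R y) + \<beta> * snd ((1-t) *\<^sub>R x + t *\<^sub>R y)
        \<le> (1-t) * (\<alpha> * fst x + \<beta> * snd x) + t * (\<alpha> * fst y + \<beta> * snd y)"
    by (simp add: algebra_simps)
qed

lemma pos_comb: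
  fixes a b p q :: real
  assumes "a > 0" "b > 0" "p \<ge> 0" "q \<ge> 0" "p + q = 1"
  shows "p* a + q* b > 0"
proof (cases "p > 0")
  case True
  then have "p* a > 0" using assms by simp
  moreover have "q* b \<ge> 0" using assms by simp
  ultimately show ?thesis by linarith
next
  case False
  then have "p = 0" using assms by simp
  then show ?thesis using assms by simp
qed

lemma convex_D:
  "convex {(rA, rB). rA > 0 \<and> rB > 0 \<and> rA + rB \<le> (M::real)}"
  unfolding convex_def
proof (intro ballI allI impI)
  fix x y :: "real \<times> real" and p q :: real
  assume x: "x \<in> {(rA, rB). rA > 0 \<and> rB > 0 \<and> rA + rB \<le> M}"
     and y: "y \<in> {(rA, rB). rA > 0 \<and> rB > 0 \<and> rA + rB \<le> M}"
     and uv: "0 \<le> p" "0 \<le> q" "p + q = 1"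
  obtain x1 x2 where xe: "x = (x1, x2)" by (cases x)
  obtain y1 y2 where ye: "y = (y1, y2)" by (cases y)
  have h: "x1 > 0" "x2 > 0" "x1 + x2 \<le> M" "y1 > 0" "y2 > 0" "y1 + y2 \<le> M"
    using x y by (auto simp: xe ye)
  have "p* (x1+x2) + q* (y1+y2) \<le> p* M + q* M"
    using h uv by (intro add_mono mult_left_mono) auto
  also have "\<dots> = (p+q)* M" by (simp add: algebra_simps)
  also have "\<dots> = M" using uv by simp
  finally have "p* x1 + q* y1 + (p* x2 + q* y2) \<le> M" by (simp add: algebra_simps)
  moreover have "p* x1 + q* y1 > 0" "p* x2 + q* y2 > 0" using h uv by (auto intro: pos_comb)
  ultimately show "p *\<^sub>R x + q *\<^sub>R y \<in> {(rA, rB). rA > 0 \<and> rB > 0 \<and> rA + rB \<le> M}"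
    by (simp add: xe ye)
qed

theorem lemmaF1:
  fixes aA aB aAB C \<nu> :: real
  assumes "aA > 0" and "aB > 0" and "aAB > 0" and "aAB^2 \<le> aA * aB"
    and "C > 0" and "0 < \<nu>" and "\<nu> \<le> 1/10000"
  shows "\<exists>\<delta>>0. \<forall>\<rho> L \<mu>A \<mu>B. \<rho> > 0 \<longrightarrow> L > 0 \<longrightarrow>
           \<rho> * abar aA aB aAB ^ 3 < \<delta> \<longrightarrow>
           convex_on {(rA, rB). rA > 0 \<and> rB > 0 \<and> rA + rB \<le> C * Kz \<nu> \<rho> aA aB aAB * \<rho> * L}
             (\<lambda>(rA, rB). Ff aA aB aAB \<rho> L \<mu>A \<mu>B rA rB)"
proof (intro exI[of _ 1] conjI allI impI)
  fix \<rho> L \<mu>A \<mu>B :: real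
  assume \<rho>: "\<rho> > 0" and L: "L > 0"
  define M where "M = C * Kz \<nu> \<rho> aA aB aAB * \<rho> * L"
  define D where "D = {(rA, rB). rA > 0 \<and> rB > 0 \<and> rA + rB \<le> M}"
  have cD: "convex D" unfolding D_def by (rule convex_D)
  define d where "d = aA* aB - aAB^2"
  define Tf where "Tf = (\<lambda>p::real\<times>real. aA * fst p + aB * snd p)"
  define cc where "cc = (aAB^2 - d)/aA"
  define ee where "ee = 2* aAB * sqrt d/aA"
  define l1 where "l1 = (\<lambda>p::real\<times>real. aA * fst p + cc * snd p)"
  define l2 where "l2 = (\<lambda>p::real\<times>real. ee * snd p)"
  define c0 where "c0 = (8 * pi) powr (5/2) * (2 * sqrt 2 / (15 * pi^2))"
  define c1 where "c1 = 8 * pi * abar aA aB aAB / L * (\<rho> * abar aA aB aAB ^ 3) powr (1/4)"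
  define \<phi> where "\<phi> = (\<lambda>x. (Tf x + sqrt (l1 x ^ 2 + l2 x ^ 2)) powr (5/2)
                          + (Tf x - sqrt (l1 x ^ 2 + l2 x ^ 2)) powr (5/2))"
  have abar0: "abar aA aB aAB > 0" using assms by (simp add: abar_def)
  have c1: "c1 \<ge> 0" unfolding c1_def using abar0 L \<rho> by simp
  have c0: "c0 \<ge> 0" unfolding c0_def by simp
  have phiconv: "convex_on D \<phi>" unfolding \<phi>_def
  proof (rule abstract_convex[OF _ _ _ _ cD])
    fix x assume "x \<in> D"
    then obtain rA rB where xe: "x = (rA, rB)" and r: "rA > 0" "rB > 0" by (auto simp: D_def)
    show "sqrt (l1 x ^ 2 + l2 x ^ 2) \<le> Tf x"
      using identity(2)[OF assms(1-4) r] by (simp add: xe l1_def l2_def Tf_def d_def cc_def ee_def)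
  qed (auto simp: Tf_def l1_def l2_def algebra_simps)
  define g where "g = (\<lambda>x. c1 * (fst x ^ 2 + snd x ^ 2) + (L powr (-3/2) * c0 * \<phi> x + ((-\<mu>A) * fst x + (-\<mu>B) * snd x)))"
  have gconv: "convex_on D g" unfolding g_def
    using c1 c0 L
    by (intro convex_on_add convex_on_cmul[OF c1] quad_convex[OF cD] convex_on_cmul phiconv lin_convex[OF cD]) auto
  show "convex_on {(rA, rB). rA > 0 \<and> rB > 0 \<and> rA + rB \<le> C * Kz \<nu> \<rho> aA aB aAB * \<rho> * L}
             (\<lambda>(rA, rB). Ff aA aB aAB \<rho> L \<mu>A \<mu>B rA rB)"
    unfolding M_def[symmetric] D_def[symmetric]
  proof (rule convex_on_cong'[OF gconv])
    fix x assume "x \<in> D"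
    then obtain rA rB where xe: "x = (rA, rB)" and r: "rA > 0" "rB > 0" by (auto simp: D_def)
    have "\<phi> x = (aA* rA + aB* rB + sqrt ((aA* rA + (aAB^2 - d)/aA* rB)^2 + (2* aAB * sqrt d/aA* rB)^2)) powr (5/2)
       + (aA* rA + aB* rB - sqrt ((aA* rA + (aAB^2 - d)/aA* rB)^2 + (2* aAB * sqrt d/aA* rB)^2)) powr (5/2)"
      by (simp add: \<phi>_def xe Tf_def l1_def l2_def cc_def ee_def)
    then have "Gf aA aB aAB rA rB powr (5/4) * If aA aB aAB rA rB = c0 * \<phi> x"
      using identity(1)[OF assms(1-4) r] by (simp add: c0_def d_def)
    then show "g x = (\<lambda>(rA, rB). Ff aA aB aAB \<rho> L \<mu>A \<mu>B rA rB) x"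
      by (simp add: g_def xe Ff_def c1_def algebra_simps)
  qed
qed simp

end
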